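(* Let $G=(V,E)$ be a connected undirected simple graph with $n=|V|$ nodes, adjacency matrix $\tilde{\mathbf{A}}\in\{0,1\}^{n\times n}$ (zero diagonal), and node degrees $d_l=\sum_{j=1}^n\tilde{\mathbf{A}}_{lj}$. Let $\mathbf{D}$ be the diagonal matrix with $\mathbf{D}_{ll}=1+d_l$ and $\mathbf{A}=\mathbf{D}^{-1/2}(\tilde{\mathbf{A}}+\mathbf{I})\mathbf{D}^{-1/2}$. Let $\mathbf{W}\in\mathbb{R}^{c\times c}$, $\mathbf{B}\in\mathbb{R}^{c'\times c}$, inputs $\mathbf{U}_t\in\mathbb{R}^{n\times c'}$, and consider the recurrence $\mathbf{X}_{t+1}=\mathbf{A}\mathbf{X}_t\mathbf{W}+\mathbf{U}_{t+1}\mathbf{B}$, $\mathbf{X}_t\in\mathbb{R}^{n\times c}$. Then, for large values of $t-s$, the Jacobian from node $j$ at time $s$ to node $i$ at time $t\ge s$ admits the approximation $$\frac{\partial \mathbf{X}_t^{(i)}}{\partial \mathbf{X}_s^{(j)}}\approx\frac{\sqrt{(1+d_i)(1+d_j)}}{|V|+2|E|}\,(\mathbf{W}^{\top})^{t-s},$$ in the sense that $\frac{\partial \mathbf{X}_t^{(i)}}{\partial \mathbf{X}_s^{(j)}}=c_{ij}(t-s)\,(\mathbf{W}^{\top})^{t-s}$ for scalars $c_{ij}(t-s)$ satisfying $c_{ij}(t-s)\to\frac{\sqrt{(1+d_i)(1+d_j)}}{|V|+2|E|}$ as $t-s\to\infty$.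
   Context: $\mathbf{X}_t^{(i)}\in\mathbb{R}^{1\times c}$ denotes the $i$-th row of $\mathbf{X}_t$, regarded as a function of $\mathbf{X}_s$ through the recurrence with the inputs held fixed. The Jacobian $\partial\mathbf{y}/\partial\mathbf{x}$ of row vectors is the $c\times c$ matrix with $(p,q)$ entry $\partial y_p/\partial x_q$. $|E|$ is the number of undirected edges. *)

theory Defs
  imports "HOL-Analysis.Analysis"
begin

primrec mpow :: "real^'n^'n \<Rightarrow> nat \<Rightarrow> real^'n^'n" where
  "mpow M 0 = mat 1"
| "mpow M (Suc k) = M ** mpow M k"

text \<open>Graph on vertex type 'v given by a symmetric irreflexive edge relation E.\<close>
definition degree :: "('v \<Rightarrow> 'v \<Rightarrow> bool) \<Rightarrow> 'v \<Rightarrow> nat" where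
  "degree E l = card {j. E l j}"

definition adj_matrix :: "('v::finite \<Rightarrow> 'v \<Rightarrow> bool) \<Rightarrow> real^'v^'v" where
  "adj_matrix E = (\<chi> l j. if E l j then 1 else 0)"

definition deg_inv_sqrt :: "('v::finite \<Rightarrow> 'v \<Rightarrow> bool) \<Rightarrow> real^'v^'v" where
  "deg_inv_sqrt E = (\<chi> l j. if l = j then 1 / sqrt (1 + real (degree E l)) else 0)"

definition norm_adj :: "('v::finite \<Rightarrow> 'v \<Rightarrow> bool) \<Rightarrow> real^'v^'v" where
  "norm_adj E = deg_inv_sqrt E ** (adj_matrix E + mat 1) ** deg_inv_sqrt E"

definition undirected_edges :: "('v \<Rightarrow> 'v \<Rightarrow> bool) \<Rightarrow> 'v set set" where
  "undirected_edges E = {{u, v} | u v. E u v}"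

text \<open>State X_{s+k} of the recurrence X_{t+1} = A X_t W + U_{t+1} B, started from X_s = X.\<close>
primrec rec_state ::
  "real^'n^'n \<Rightarrow> real^'c^'c \<Rightarrow> real^'c^'d \<Rightarrow> (nat \<Rightarrow> real^'d^'n) \<Rightarrow> nat \<Rightarrow> real^'c^'n
   \<Rightarrow> nat \<Rightarrow> real^'c^'n" where
  "rec_state A W B U s X 0 = X"
| "rec_state A W B U s X (Suc k) = A ** rec_state A W B U s X k ** W + U (s + Suc k) ** B"

definition set_row :: "real^'c^'n \<Rightarrow> 'n \<Rightarrow> real^'c \<Rightarrow> real^'c^'n" where
  "set_row X j y = (\<chi> l. if l = j then y else X $ l)"

end

theory Submission
  imports Defs
begin


primrec pw :: "('n \<Rightarrow> 'n \<Rightarrow> real) \<Rightarrow> nat \<Rightarrow> 'n \<Rightarrow> 'n \<Rightarrow> real" where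
  "pw p 0 i j = (if i = j then 1 else 0)"
| "pw p (Suc k) i j = (\<Sum>l\<in>UNIV. p i l * pw p k l j)"

lemma if01_mult: "(if c then 1 else 0) * (x::real) = (if c then x else 0)" "x * (if c then 1 else 0) = (if c then x else 0)"
  by simp_all

lemma swap_helper:
  fixes a :: "'n::finite \<Rightarrow> real" and b :: "'n \<Rightarrow> 'n \<Rightarrow> real"
  shows "(\<Sum>l\<in>UNIV. a l * (\<Sum>r\<in>UNIV. b l r * c r)) = (\<Sum>r\<in>UNIV. (\<Sum>l\<in>UNIV. a l * b l r) * c r)"
proof -
  have "(\<Sum>l\<in>UNIV. a l * (\<Sum>r\<in>UNIV. b l r * c r)) = (\<Sum>l\<in>UNIV. \<Sum>r\<in>UNIV. a l * b l r * c r)"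
    by (simp add: sum_distrib_left mult.assoc)
  also have "\<dots> = (\<Sum>r\<in>UNIV. \<Sum>l\<in>UNIV. a l * b l r * c r)" by (rule sum.swap)
  also have "\<dots> = (\<Sum>r\<in>UNIV. (\<Sum>l\<in>UNIV. a l * b l r) * c r)" by (simp add: sum_distrib_right)
  finally show ?thesis .
qed

lemma pw_add:
  fixes p :: "'n::finite \<Rightarrow> 'n \<Rightarrow> real"
  shows "pw p (m + k) i j = (\<Sum>l\<in>UNIV. pw p m i l * pw p k l j)"
proof (induction m arbitrary: i)
  case 0
  then show ?case by (simp add: if01_mult)
next
  case (Suc m)
  have "pw p (Suc m + k) i j = (\<Sum>l\<in>UNIV. p i l * (\<Sum>r\<in>UNIV. pw p m l r * pw p k r j))"
    using Suc by simp
  also have "\<dots> = (\<Sum>r\<in>UNIV. (\<Sum>l\<in>UNIV. p i l * pw p m l r) * pw p k r j)"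
    by (rule swap_helper)
  finally show ?case by (simp only: pw.simps)
qed

lemma pw_one: fixes p :: "'n::finite \<Rightarrow> 'n \<Rightarrow> real" shows "pw p 1 i j = p i j"
  by (simp add: if01_mult)

lemma pw_Suc': fixes p :: "'n::finite \<Rightarrow> 'n \<Rightarrow> real"
  shows "pw p (Suc k) i j = (\<Sum>l\<in>UNIV. pw p k i l * p l j)"
proof -
  have "pw p (Suc k) i j = pw p (k + 1) i j" by simp
  also have "\<dots> = (\<Sum>l\<in>UNIV. pw p k i l * pw p 1 l j)" by (rule pw_add)
  finally show ?thesis by (simp only: pw_one)
qed

lemma contract:
  fixes Q :: "'n::finite \<Rightarrow> 'n \<Rightarrow> real" and f :: "'n \<Rightarrow> real"
  assumes Qnn: "\<And>i l. Q i l \<ge> 0" and Qsum: "\<And>i. (\<Sum>l\<in>UNIV. Q i l) = 1"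
    and Qd: "\<And>i l. d \<le> Q i l" and d0: "d \<ge> 0"
  shows "Max (range (\<lambda>i. \<Sum>l\<in>UNIV. Q i l * f l)) - Min (range (\<lambda>i. \<Sum>l\<in>UNIV. Q i l * f l))
         \<le> (1 - 2*d) * (Max (range f) - Min (range f))"
proof -
  define a where "a = Min (range f)"
  define b where "b = Max (range f)"
  define g where "g i = (\<Sum>l\<in>UNIV. Q i l * f l)" for i
  have "a \<in> range f" unfolding a_def by (rule Min_in) auto
  then obtain l0 where l0: "f l0 = a" by auto
  have "b \<in> range f" unfolding b_def by (rule Max_in) auto
  then obtain l1 where l1: "f l1 = b" by auto
  have fa: "a \<le> f l" for l unfolding a_def by (rule Min_le) auto
  have fb: "f l \<le> b" for l unfolding b_def by (rule Max_ge) auto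
  have ab: "a \<le> b" using fa fb by (meson order_trans)
  have up: "g i \<le> b - d * (b - a)" for i
  proof -
    have "b - g i = (\<Sum>l\<in>UNIV. Q i l * (b - f l))"
      using Qsum[of i] by (simp add: g_def right_diff_distrib sum_subtractf sum_distrib_right[symmetric])
    also have "\<dots> \<ge> Q i l0 * (b - f l0)"
      by (rule member_le_sum[where f="\<lambda>l. Q i l * (b - f l)"]) (auto intro!: mult_nonneg_nonneg Qnn simp: fb)
    moreover have "Q i l0 * (b - f l0) \<ge> d * (b - a)" using l0 Qd[of i l0] ab by (simp add: mult_right_mono)
    ultimately show ?thesis by linarith
  qed
  have lo: "g i \<ge> a + d * (b - a)" for i
  proof -
    have "g i - a = (\<Sum>l\<in>UNIV. Q i l * (f l - a))"
      using Qsum[of i] by (simp add: g_def right_diff_distrib sum_subtractf sum_distrib_right[symmetric])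
    also have "\<dots> \<ge> Q i l1 * (f l1 - a)"
      by (rule member_le_sum[where f="\<lambda>l. Q i l * (f l - a)"]) (auto intro!: mult_nonneg_nonneg Qnn simp: fa)
    moreover have "Q i l1 * (f l1 - a) \<ge> d * (b - a)" using l1 Qd[of i l1] ab by (simp add: mult_right_mono)
    ultimately show ?thesis by linarith
  qed
  have "Max (range g) \<le> b - d * (b - a)" using up by (subst Max_le_iff) auto
  moreover have "Min (range g) \<ge> a + d * (b - a)" using lo by (subst Min_ge_iff) auto
  ultimately show ?thesis unfolding g_def[symmetric] a_def[symmetric] b_def[symmetric] by (simp add: algebra_simps)
qed

locale chain =
  fixes p :: "'n::finite \<Rightarrow> 'n \<Rightarrow> real" and \<pi> :: "'n \<Rightarrow> real"
  assumes nonneg: "\<And>i l. p i l \<ge> 0"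
    and rowsum: "\<And>i. (\<Sum>l\<in>UNIV. p i l) = 1"
    and diagpos: "\<And>l. p l l > 0"
    and conn: "\<And>i l. (\<lambda>a b. p a b > 0)\<^sup>*\<^sup>* i l"
    and pinonneg: "\<And>i. \<pi> i \<ge> 0"
    and pisum: "(\<Sum>i\<in>UNIV. \<pi> i) = 1"
    and stat: "\<And>l. (\<Sum>i\<in>UNIV. \<pi> i * p i l) = \<pi> l"
begin

lemma pw_nonneg: "pw p k i j \<ge> 0"
  by (induction k arbitrary: i) (auto intro!: sum_nonneg mult_nonneg_nonneg nonneg)

lemma pw_rowsum: "(\<Sum>j\<in>UNIV. pw p k i j) = 1"
proof (induction k arbitrary: i)
  case 0 then show ?case by simp
next
  case (Suc k)
  have "(\<Sum>j\<in>UNIV. pw p (Suc k) i j) = (\<Sum>l\<in>UNIV. p i l * (\<Sum>j\<in>UNIV. pw p k l j * 1))"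
    using swap_helper[of "p i" "\<lambda>l j. pw p k l j" "\<lambda>_. 1"] by simp
  also have "\<dots> = 1" using Suc rowsum by simp
  finally show ?case .
qed

lemma pw_stat: "(\<Sum>i\<in>UNIV. \<pi> i * pw p k i j) = \<pi> j"
proof (induction k)
  case 0 then show ?case by (simp add: if_distrib cong: if_cong)
next
  case (Suc k)
  have "(\<Sum>i\<in>UNIV. \<pi> i * pw p (Suc k) i j) = (\<Sum>l\<in>UNIV. (\<Sum>i\<in>UNIV. \<pi> i * p i l) * pw p k l j)"
    using swap_helper[of \<pi> p "\<lambda>l. pw p k l j"] by simp
  also have "\<dots> = \<pi> j" using Suc stat by simp
  finally show ?case .
qed

lemma pw_pos_Suc: "pw p k i j > 0 \<Longrightarrow> pw p (Suc k) i j > 0"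
proof -
  assume a: "pw p k i j > 0"
  have "pw p k i j * p j j \<le> (\<Sum>l\<in>UNIV. pw p k i l * p l j)"
    by (rule member_le_sum[where f="\<lambda>l. pw p k i l * p l j"]) (auto intro!: mult_nonneg_nonneg pw_nonneg nonneg)
  moreover have "pw p k i j * p j j > 0" using a diagpos by simp
  ultimately show ?thesis by (simp only: pw_Suc')
qed

lemma pw_pos_mono: "k \<le> k' \<Longrightarrow> pw p k i j > 0 \<Longrightarrow> pw p k' i j > 0"
  by (induction k' rule: dec_induct) (auto intro: pw_pos_Suc simp del: pw.simps)

lemma pw_pos_ex: "\<exists>k. pw p k i l > 0"
  using conn[of i l]
proof (induction rule: rtranclp_induct)
  case base
  then show ?case by (rule exI[of _ 0]) simp
next
  case (step y z)
  then obtain k where k: "pw p k i y > 0" by blast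
  have "pw p k i y * p y z \<le> (\<Sum>l\<in>UNIV. pw p k i l * p l z)"
    by (rule member_le_sum[where f="\<lambda>l. pw p k i l * p l z"]) (auto intro!: mult_nonneg_nonneg pw_nonneg nonneg)
  moreover have "pw p k i y * p y z > 0" using k step by simp
  ultimately show ?case by (intro exI[of _ "Suc k"]) (unfold pw_Suc', linarith)
qed

lemma pw_pos_all: "\<exists>m>0. \<exists>\<delta>>0. \<delta> \<le> 1/4 \<and> (\<forall>i l. \<delta> \<le> pw p m i l)"
proof -
  define K where "K i l = (SOME k. pw p k i l > 0)" for i l
  have K: "pw p (K i l) i l > 0" for i l unfolding K_def by (rule someI_ex, rule pw_pos_ex)
  define m where "m = Suc (\<Sum>i\<in>UNIV. \<Sum>l\<in>UNIV. K i l)"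
  have "K i l \<le> m" for i l
  proof -
    have "K i l \<le> (\<Sum>l\<in>UNIV. K i l)" by (rule member_le_sum) auto
    also have "\<dots> \<le> (\<Sum>i\<in>UNIV. \<Sum>l\<in>UNIV. K i l)" by (rule member_le_sum[where f="\<lambda>i. \<Sum>l\<in>UNIV. K i l"]) auto
    finally show ?thesis unfolding m_def by simp
  qed
  then have pos: "pw p m i l > 0" for i l using K pw_pos_mono by blast
  define d where "d = Min ((\<lambda>(i,l). pw p m i l) ` UNIV)"
  have "d \<in> (\<lambda>(i,l). pw p m i l) ` UNIV" unfolding d_def by (rule Min_in) auto
  then have dpos: "d > 0" using pos by auto
  have dle: "d \<le> pw p m i l" for i l unfolding d_def by (rule Min_le) auto
  show ?thesis
  proof (intro exI conjI allI)
    show "m > 0" unfolding m_def by simp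
    show "min d (1/4) > 0" using dpos by simp
    show "min d (1/4) \<le> 1/4" by simp
    show "min d (1/4) \<le> pw p m i l" for i l using dle[of i l] by linarith
  qed
qed


lemma pw_conv: "(\<lambda>k. pw p k i j) \<longlonglongrightarrow> \<pi> j"
proof -
  obtain m d where m: "m > 0" and d: "d > 0" "d \<le> 1/4" and md: "\<And>i l. d \<le> pw p m i l"
    using pw_pos_all by blast
  define osc where "osc k = Max (range (\<lambda>i. pw p k i j)) - Min (range (\<lambda>i. pw p k i j))" for k
  define \<rho> where "\<rho> = 1 - 2 * d"
  have rho: "0 \<le> \<rho>" "\<rho> < 1" using d unfolding \<rho>_def by auto
  have lo: "Min (range (\<lambda>i. pw p k i j)) \<le> pw p k i' j" for k i' by (rule Min_le) auto
  have hi: "pw p k i' j \<le> Max (range (\<lambda>i. pw p k i j))" for k i' by (rule Max_ge) auto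
  have osc_nn: "osc k \<ge> 0" for k using lo[of k i] hi[of k i] unfolding osc_def by linarith
  have osc_Suc: "osc (Suc k) \<le> osc k" for k
    using contract[of p 0 "\<lambda>l. pw p k l j"] nonneg rowsum unfolding osc_def by simp
  have osc_m: "osc (m + k) \<le> \<rho> * osc k" for k
    using contract[of "pw p m" d "\<lambda>l. pw p k l j"] pw_nonneg pw_rowsum md d
    unfolding osc_def \<rho>_def pw_add by simp
  have osc_mono: "osc k \<le> osc 0" for k
  proof (induction k)
    case (Suc k) then show ?case using osc_Suc[of k] by linarith
  qed simp
  have osc0: "osc 0 \<le> 1"
  proof -
    have "Max (range (\<lambda>i. pw p 0 i j)) \<le> 1" by (subst Max_le_iff) auto
    moreover have "Min (range (\<lambda>i. pw p 0 i j)) \<ge> 0" by (subst Min_ge_iff) auto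
    ultimately show ?thesis unfolding osc_def by linarith
  qed
  have osc_bound: "osc k \<le> \<rho> ^ (k div m)" for k
  proof (induction k rule: less_induct)
    case (less k)
    show ?case
    proof (cases "k < m")
      case True
      then show ?thesis using osc_mono[of k] osc0 by simp
    next
      case False
      then have k: "k = m + (k - m)" by simp
      have "k - m < k" using m False by simp
      then have ih: "osc (k - m) \<le> \<rho> ^ ((k - m) div m)" by (rule less.IH)
      have "osc k \<le> \<rho> * osc (k - m)" using osc_m[of "k - m"] k by simp
      also have "\<dots> \<le> \<rho> * \<rho> ^ ((k - m) div m)" using ih rho by (simp add: mult_left_mono)
      also have "\<dots> = \<rho> ^ (k div m)"
      proof -
        have "k div m = Suc ((k - m) div m)" using m False by (simp add: div_if)
        then show ?thesis by simp
      qed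
      finally show ?thesis .
    qed
  qed
  have close: "\<bar>pw p k i j - \<pi> j\<bar> \<le> osc k" for k
  proof -
    have "\<pi> j = (\<Sum>i'\<in>UNIV. \<pi> i' * pw p k i' j)" using pw_stat by simp
    also have "\<dots> \<le> (\<Sum>i'\<in>UNIV. \<pi> i' * Max (range (\<lambda>i. pw p k i j)))"
      by (rule sum_mono) (use hi pinonneg in \<open>auto intro: mult_left_mono\<close>)
    finally have u: "\<pi> j \<le> Max (range (\<lambda>i. pw p k i j))" by (simp add: sum_distrib_right[symmetric] pisum)
    have "(\<Sum>i'\<in>UNIV. \<pi> i' * Min (range (\<lambda>i. pw p k i j))) \<le> (\<Sum>i'\<in>UNIV. \<pi> i' * pw p k i' j)"
      by (rule sum_mono) (use lo pinonneg in \<open>auto intro: mult_left_mono\<close>)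
    also have "\<dots> = \<pi> j" using pw_stat by simp
    finally have l: "Min (range (\<lambda>i. pw p k i j)) \<le> \<pi> j" by (simp add: sum_distrib_right[symmetric] pisum)
    show ?thesis using u l lo[of k i] hi[of k i] unfolding osc_def by linarith
  qed
  have lim0: "(\<lambda>k. \<rho> ^ (k div m)) \<longlonglongrightarrow> 0"
  proof (rule LIMSEQ_I)
    fix r :: real assume r: "r > 0"
    have "(\<lambda>n. \<rho> ^ n) \<longlonglongrightarrow> 0" using rho by (intro LIMSEQ_power_zero) simp
    then obtain N where "\<forall>n\<ge>N. norm (\<rho> ^ n - 0) < r" using r LIMSEQ_D by blast
    then have "norm (\<rho> ^ N) < r" by auto
    then have N: "\<rho> ^ N < r" using rho by simp
    show "\<exists>no. \<forall>n\<ge>no. norm (\<rho> ^ (n div m) - 0) < r"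
    proof (intro exI allI impI)
      fix n assume "n \<ge> N * m"
      then have "N \<le> n div m" using m by (metis div_le_mono div_mult_self_is_m)
      then have "\<rho> ^ (n div m) \<le> \<rho> ^ N" using rho by (simp add: power_decreasing)
      then show "norm (\<rho> ^ (n div m) - 0) < r" using N rho by simp
    qed
  qed
  have "(\<lambda>k. pw p k i j - \<pi> j) \<longlonglongrightarrow> 0"
  proof (rule Lim_null_comparison[OF _ lim0], rule always_eventually, rule allI)
    fix k show "norm (pw p k i j - \<pi> j) \<le> \<rho> ^ (k div m)" using close[of k] osc_bound[of k] by simp
  qed
  then have "(\<lambda>k. (pw p k i j - \<pi> j) + \<pi> j) \<longlonglongrightarrow> 0 + \<pi> j" by (rule tendsto_add) simp
  then show ?thesis by simp
qed

end


definition Dg :: "('v \<Rightarrow> 'v \<Rightarrow> bool) \<Rightarrow> 'v \<Rightarrow> real" where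
  "Dg E l = 1 + real (degree E l)"

definition Mg :: "('v \<Rightarrow> 'v \<Rightarrow> bool) \<Rightarrow> 'v \<Rightarrow> 'v \<Rightarrow> real" where
  "Mg E i l = (if E i l then 1 else 0) + (if i = l then 1 else 0)"

definition Pg :: "('v \<Rightarrow> 'v \<Rightarrow> bool) \<Rightarrow> 'v \<Rightarrow> 'v \<Rightarrow> real" where
  "Pg E i l = Mg E i l / Dg E i"

lemma Dg_pos: "Dg E l > 0" unfolding Dg_def by simp

lemma Dg_nz: "Dg E l \<noteq> 0" using Dg_pos[of E l] by simp

lemma Mg_rowsum: "(\<Sum>l\<in>UNIV. Mg E i l) = Dg (E :: 'v::finite \<Rightarrow> _) i"
proof -
  have "(\<Sum>l\<in>UNIV. (if E i l then 1 else 0 :: real)) = real (card {l. E i l})"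
    by (simp add: sum.If_cases)
  then show ?thesis unfolding Mg_def Dg_def degree_def by (simp add: sum.distrib)
qed

lemma if0_mult: "(if c then x else 0) * (y::real) = (if c then x * y else 0)" "y * (if c then x else 0) = (if c then y * x else 0)"
  by simp_all

lemma diag_left:
  fixes N :: "real^'v::finite^'v"
  shows "((\<chi> l j. if l = j then s l else 0) ** N) $ i $ q = s i * N $ i $ q"
  by (simp add: matrix_matrix_mult_def if0_mult)

lemma diag_right:
  fixes N :: "real^'v::finite^'v"
  shows "(N ** (\<chi> l j. if l = j then s l else 0)) $ i $ q = N $ i $ q * s q"
  by (simp add: matrix_matrix_mult_def if0_mult)

lemma norm_adj_entry:
  fixes E :: "'v::finite \<Rightarrow> 'v \<Rightarrow> bool"
  shows "norm_adj E $ i $ l = Mg E i l / (sqrt (Dg E i) * sqrt (Dg E l))"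
  unfolding norm_adj_def deg_inv_sqrt_def diag_right diag_left
  by (simp add: Mg_def Dg_def adj_matrix_def mat_def)

lemma mpow_entry:
  fixes E :: "'v::finite \<Rightarrow> 'v \<Rightarrow> bool"
  shows "mpow (norm_adj E) k $ i $ j = sqrt (Dg E i) * pw (Pg E) k i j / sqrt (Dg E j)"
proof (induction k arbitrary: i)
  case 0
  then show ?case using Dg_pos[of E j] by (simp add: mat_def)
next
  case (Suc k)
  have si: "sqrt (Dg E i) > 0" using Dg_pos by simp
  have g: "x * y / (s * t) = x * (s * y) / ((s * s) * t)" if "s > 0" for x y s t :: real
    using that by (cases "t = 0") (auto simp: field_simps)
  have "mpow (norm_adj E) (Suc k) $ i $ j = (\<Sum>l\<in>UNIV. norm_adj E $ i $ l * mpow (norm_adj E) k $ l $ j)"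
    by (simp add: matrix_matrix_mult_def)
  also have "\<dots> = (\<Sum>l\<in>UNIV. sqrt (Dg E i) * (Pg E i l * pw (Pg E) k l j) / sqrt (Dg E j))"
  proof (rule sum.cong[OF refl])
    fix l
    have sl: "sqrt (Dg E l) > 0" using Dg_pos by simp
    have di: "Dg E i = sqrt (Dg E i) * sqrt (Dg E i)" using Dg_pos[of E i] by simp
    show "norm_adj E $ i $ l * mpow (norm_adj E) k $ l $ j = sqrt (Dg E i) * (Pg E i l * pw (Pg E) k l j) / sqrt (Dg E j)"
    proof -
      have "norm_adj E $ i $ l * mpow (norm_adj E) k $ l $ j
        = Mg E i l * (sqrt (Dg E l) * pw (Pg E) k l j) / ((sqrt (Dg E i) * sqrt (Dg E l)) * sqrt (Dg E j))"
        unfolding norm_adj_entry Suc by simp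
      also have "\<dots> = Mg E i l * pw (Pg E) k l j / (sqrt (Dg E i) * sqrt (Dg E j))"
        using sl by (simp add: field_simps)
      also have "\<dots> = Mg E i l * (sqrt (Dg E i) * pw (Pg E) k l j) / ((sqrt (Dg E i) * sqrt (Dg E i)) * sqrt (Dg E j))"
        by (rule g[OF si])
      also have "\<dots> = sqrt (Dg E i) * (Pg E i l * pw (Pg E) k l j) / sqrt (Dg E j)"
        unfolding Pg_def using Dg_pos[of E i] by (simp add: field_simps)
      finally show ?thesis .
    qed
  qed
  also have "\<dots> = sqrt (Dg E i) * pw (Pg E) (Suc k) i j / sqrt (Dg E j)"
    by (simp add: sum_divide_distrib sum_distrib_left)
  finally show ?case .
qed


lemma edges_count:
  fixes E :: "'v::finite \<Rightarrow> 'v \<Rightarrow> bool"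
  assumes sym: "\<And>u v. E u v \<Longrightarrow> E v u" and irrefl: "\<And>u. \<not> E u u"
  shows "(\<Sum>l\<in>UNIV. degree E l) = 2 * card (undirected_edges E)"
proof -
  define F where "F e = {(u, v). E u v \<and> {u, v} = e}" for e :: "'v set"
  have "(\<Sum>l\<in>UNIV. degree E l) = card (SIGMA l:UNIV. {j. E l j})"
    unfolding degree_def by (simp add: card_SigmaI)
  also have "(SIGMA l:UNIV. {j. E l j}) = (\<Union>e\<in>undirected_edges E. F e)"
    unfolding F_def undirected_edges_def by auto
  also have "card \<dots> = (\<Sum>e\<in>undirected_edges E. card (F e))"
    by (rule card_UN_disjoint) (auto simp: F_def)
  also have "\<dots> = (\<Sum>e\<in>undirected_edges E. 2)"
  proof (rule sum.cong[OF refl])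
    fix e assume "e \<in> undirected_edges E"
    then obtain a b where e: "e = {a, b}" and ab: "E a b" unfolding undirected_edges_def by auto
    have ne: "a \<noteq> b" using ab irrefl by auto
    have "F e = {(a, b), (b, a)}"
      unfolding F_def e using ab sym by (auto simp: doubleton_eq_iff)
    then show "card (F e) = 2" using ne by simp
  qed
  finally show ?thesis by simp
qed

lemma Dg_sum:
  fixes E :: "'v::finite \<Rightarrow> 'v \<Rightarrow> bool"
  assumes sym: "\<And>u v. E u v \<Longrightarrow> E v u" and irrefl: "\<And>u. \<not> E u u"
  shows "(\<Sum>l\<in>UNIV. Dg E l) = real CARD('v) + 2 * real (card (undirected_edges E))"
proof -
  have "(\<Sum>l\<in>UNIV. Dg E l) = real CARD('v) + real (\<Sum>l\<in>UNIV. degree E l)"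
    unfolding Dg_def by (simp add: sum.distrib)
  moreover have "(\<Sum>l\<in>UNIV. degree E l) = 2 * card (undirected_edges E)"
    by (rule edges_count) (use sym irrefl in auto)
  ultimately show ?thesis by simp
qed

lemma graph_chain:
  fixes E :: "'v::finite \<Rightarrow> 'v \<Rightarrow> bool"
  assumes sym: "\<And>u v. E u v \<Longrightarrow> E v u" and irrefl: "\<And>u. \<not> E u u"
    and connected: "\<And>u v. E\<^sup>*\<^sup>* u v"
  shows "chain (Pg E) (\<lambda>l. Dg E l / (\<Sum>r\<in>UNIV. Dg E r))"
proof -
  define S where "S = (\<Sum>r\<in>UNIV. Dg E r)"
  have Spos: "S > 0" unfolding S_def by (rule sum_pos) (auto intro: Dg_pos)
  have Mnn: "Mg E i l \<ge> 0" for i l by (simp add: Mg_def)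
  have Msym: "Mg E i l = Mg E l i" for i l using sym by (auto simp: Mg_def)
  show ?thesis unfolding S_def[symmetric]
  proof
    show "0 \<le> Pg E i l" for i l unfolding Pg_def using Mnn Dg_pos[of E i] by simp
    show "(\<Sum>l\<in>UNIV. Pg E i l) = 1" for i
      unfolding Pg_def using Mg_rowsum[of E i] Dg_pos[of E i] by (simp add: sum_divide_distrib[symmetric])
    show "0 < Pg E l l" for l unfolding Pg_def Mg_def using irrefl Dg_pos[of E l] by simp
    show "(\<lambda>a b. 0 < Pg E a b)\<^sup>*\<^sup>* i l" for i l
    proof -
      have "E a b \<longrightarrow> 0 < Pg E a b" for a b unfolding Pg_def Mg_def using Dg_pos[of E a] by auto
      then show ?thesis using mono_rtranclp[of E "\<lambda>a b. 0 < Pg E a b"] connected by blast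
    qed
    show "0 \<le> Dg E i / S" for i using Dg_pos[of E i] Spos by simp
    show "(\<Sum>i\<in>UNIV. Dg E i / S) = 1" using Spos unfolding S_def by (simp add: sum_divide_distrib[symmetric])
    show "(\<Sum>i\<in>UNIV. Dg E i / S * Pg E i l) = Dg E l / S" for l
    proof -
      have "(\<Sum>i\<in>UNIV. Dg E i / S * Pg E i l) = (\<Sum>i\<in>UNIV. Mg E l i / S)"
        by (rule sum.cong[OF refl]) (simp add: Pg_def Dg_nz Msym[of _ l])
      also have "\<dots> = Dg E l / S" by (simp add: sum_divide_distrib[symmetric] Mg_rowsum)
      finally show ?thesis .
    qed
  qed
qed

lemma entry_limit:
  fixes E :: "'v::finite \<Rightarrow> 'v \<Rightarrow> bool"
  assumes sym: "\<And>u v. E u v \<Longrightarrow> E v u" and irrefl: "\<And>u. \<not> E u u"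
    and connected: "\<And>u v. E\<^sup>*\<^sup>* u v"
  shows "(\<lambda>k. mpow (norm_adj E) k $ i $ j) \<longlonglongrightarrow>
     sqrt ((1 + real (degree E i)) * (1 + real (degree E j))) / (real CARD('v) + 2 * real (card (undirected_edges E)))"
proof -
  define S where "S = (\<Sum>r\<in>UNIV. Dg E r)"
  interpret chain "Pg E" "\<lambda>l. Dg E l / S" unfolding S_def by (rule graph_chain) (use assms in auto)
  have "(\<lambda>k. sqrt (Dg E i) * pw (Pg E) k i j / sqrt (Dg E j)) \<longlonglongrightarrow> sqrt (Dg E i) * (Dg E j / S) / sqrt (Dg E j)"
    by (intro tendsto_intros pw_conv) (use Dg_pos[of E j] in simp)
  moreover have "sqrt (Dg E i) * (Dg E j / S) / sqrt (Dg E j) = sqrt (Dg E i * Dg E j) / S"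
  proof -
    have "Dg E j / sqrt (Dg E j) = sqrt (Dg E j)" using Dg_pos[of E j] by (simp add: real_div_sqrt)
    have "sqrt (Dg E i) * (Dg E j / S) / sqrt (Dg E j) = sqrt (Dg E i) * (Dg E j / sqrt (Dg E j)) / S"
      by simp
    also have "\<dots> = sqrt (Dg E i) * sqrt (Dg E j) / S" using \<open>Dg E j / sqrt (Dg E j) = sqrt (Dg E j)\<close> by simp
    finally show ?thesis by (simp add: real_sqrt_mult)
  qed
  moreover have "S = real CARD('v) + 2 * real (card (undirected_edges E))"
    unfolding S_def by (rule Dg_sum) (use sym irrefl in auto)
  ultimately show ?thesis unfolding mpow_entry by (simp add: Dg_def)
qed



lemma matrix_add_rdistrib': "((A::real^'n^'m) + B) ** C = A ** C + B ** C"
  by (simp add: matrix_matrix_mult_def vec_eq_iff sum.distrib distrib_right)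

lemma mpow_Suc': "mpow M (Suc k) = mpow M k ** M"
proof (induction k)
  case 0 then show ?case by simp
next
  case (Suc k)
  have "mpow M (Suc (Suc k)) = M ** (mpow M k ** M)" using Suc by simp
  also have "\<dots> = mpow M (Suc k) ** M" by (simp add: matrix_mul_assoc)
  finally show ?case .
qed

lemma transpose_mpow: "transpose (mpow M k) = mpow (transpose M) k"
proof (induction k)
  case 0 then show ?case by simp
next
  case (Suc k)
  have "transpose (mpow M (Suc k)) = transpose (mpow M k ** M)" by (simp only: mpow_Suc')
  also have "\<dots> = transpose M ** transpose (mpow M k)" by (simp add: matrix_transpose_mul)
  also have "\<dots> = mpow (transpose M) (Suc k)" using Suc by simp
  finally show ?case .
qed

lemma rec_decomp:
  "rec_state A W B U s X k = mpow A k ** X ** mpow W k + rec_state A W B U s 0 k"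
proof (induction k)
  case 0 then show ?case by simp
next
  case (Suc k)
  have "rec_state A W B U s X (Suc k) = A ** (mpow A k ** X ** mpow W k + rec_state A W B U s 0 k) ** W + U (s + Suc k) ** B"
    using Suc by simp
  also have "\<dots> = (A ** (mpow A k ** X ** mpow W k)) ** W + (A ** rec_state A W B U s 0 k ** W + U (s + Suc k) ** B)"
    by (simp add: matrix_add_ldistrib matrix_add_rdistrib' add.assoc)
  also have "(A ** (mpow A k ** X ** mpow W k)) ** W = mpow A (Suc k) ** X ** mpow W (Suc k)"
  proof -
    have w: "mpow W (Suc k) = mpow W k ** W" by (rule mpow_Suc')
    have a: "mpow A (Suc k) = A ** mpow A k" by simp
    show ?thesis by (simp only: w a matrix_mul_assoc)
  qed
  finally show ?case by simp
qed


lemma row_decomp: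
  fixes Q :: "real^'n^'n" and V :: "real^'c^'c" and X :: "real^'c^'n"
  shows "(Q ** set_row X j y ** V) $ i = (Q $ i $ j *\<^sub>R transpose V) *v y + (Q ** set_row X j 0 ** V) $ i"
proof -
  define Ey where "Ey = (\<chi> l q. if l = j then y $ q else 0)"
  have sr: "set_row X j y = set_row X j 0 + Ey"
    by (simp add: set_row_def vec_eq_iff Ey_def)
  have e1: "(Q ** Ey) $ i $ q = Q $ i $ j * y $ q" for q
    by (simp add: matrix_matrix_mult_def Ey_def if0_mult)
  have "(Q ** Ey ** V) $ i $ p = ((Q $ i $ j *\<^sub>R transpose V) *v y) $ p" for p
    by (simp add: matrix_matrix_mult_def[of "Q ** Ey"] e1 matrix_vector_mult_def transpose_def
        sum_distrib_left mult_ac)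
  then have "(Q ** Ey ** V) $ i = (Q $ i $ j *\<^sub>R transpose V) *v y" by (simp add: vec_eq_iff)
  then show ?thesis
    by (subst sr) (simp add: matrix_add_ldistrib matrix_add_rdistrib')
qed

lemma jac_part:
  fixes A :: "real^'n^'n" and W :: "real^'c^'c" and X :: "real^'c^'n"
  shows "(\<lambda>y. rec_state A W B U s (set_row X j y) k $ i) differentiable (at (X $ j))
     \<and> jacobian (\<lambda>y. rec_state A W B U s (set_row X j y) k $ i) (at (X $ j))
        = (mpow A k $ i $ j) *\<^sub>R mpow (transpose W) k"
proof -
  define M where "M = (mpow A k $ i $ j) *\<^sub>R transpose (mpow W k)"
  define K where "K = (mpow A k ** set_row X j 0 ** mpow W k) $ i + rec_state A W B U s 0 k $ i"
  have f: "(\<lambda>y. rec_state A W B U s (set_row X j y) k $ i) = (\<lambda>y. M *v y + K)"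
  proof (rule ext)
    fix y
    have "rec_state A W B U s (set_row X j y) k $ i
       = (mpow A k ** set_row X j y ** mpow W k) $ i + rec_state A W B U s 0 k $ i"
      by (subst rec_decomp) simp
    also have "\<dots> = M *v y + K"
      by (subst row_decomp) (simp add: M_def K_def add.assoc)
    finally show "rec_state A W B U s (set_row X j y) k $ i = M *v y + K" .
  qed
  have d: "((\<lambda>y. M *v y + K) has_derivative (\<lambda>h. M *v h)) (at (X $ j))"
    by (rule has_derivative_add_const, rule bounded_linear_imp_has_derivative) simp
  show ?thesis
  proof
    show "(\<lambda>y. rec_state A W B U s (set_row X j y) k $ i) differentiable (at (X $ j))"
      unfolding f differentiable_def using d by blast
    have "jacobian (\<lambda>y. M *v y + K) (at (X $ j)) = matrix (\<lambda>h. M *v h)"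
      unfolding jacobian_def frechet_derivative_at[OF d, symmetric] by (rule refl)
    then show "jacobian (\<lambda>y. rec_state A W B U s (set_row X j y) k $ i) (at (X $ j))
        = (mpow A k $ i $ j) *\<^sub>R mpow (transpose W) k"
      unfolding f by (simp add: M_def transpose_mpow)
  qed
qed


theorem theorem3p6:
  fixes E :: "'n::finite \<Rightarrow> 'n \<Rightarrow> bool"
    and W :: "real^'c^'c" and B :: "real^'c^'d" and U :: "nat \<Rightarrow> real^'d^'n"
  assumes sym: "\<And>u v. E u v \<Longrightarrow> E v u"
    and irrefl: "\<And>u. \<not> E u u"
    and connected: "\<And>u v. E\<^sup>*\<^sup>* u v"
  shows "\<forall>i j. \<exists>c :: nat \<Rightarrow> real.
           (\<forall>s k X. (\<lambda>y. rec_state (norm_adj E) W B U s (set_row X j y) k $ i) differentiable (at (X $ j))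
               \<and> jacobian (\<lambda>y. rec_state (norm_adj E) W B U s (set_row X j y) k $ i) (at (X $ j))
                   = c k *\<^sub>R mpow (transpose W) k)
         \<and> c \<longlonglongrightarrow> sqrt ((1 + real (degree E i)) * (1 + real (degree E j)))
                     / (real CARD('n) + 2 * real (card (undirected_edges E)))"
proof (intro allI)
  fix i j
  show "\<exists>c :: nat \<Rightarrow> real.
           (\<forall>s k X. (\<lambda>y. rec_state (norm_adj E) W B U s (set_row X j y) k $ i) differentiable (at (X $ j))
               \<and> jacobian (\<lambda>y. rec_state (norm_adj E) W B U s (set_row X j y) k $ i) (at (X $ j))
                   = c k *\<^sub>R mpow (transpose W) k)
         \<and> c \<longlonglongrightarrow> sqrt ((1 + real (degree E i)) * (1 + real (degree E j)))
                     / (real CARD('n) + 2 * real (card (undirected_edges E)))"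
  proof (intro exI conjI allI)
    fix s k X
    show "(\<lambda>y. rec_state (norm_adj E) W B U s (set_row X j y) k $ i) differentiable (at (X $ j))"
      using jac_part by blast
    show "jacobian (\<lambda>y. rec_state (norm_adj E) W B U s (set_row X j y) k $ i) (at (X $ j))
                   = (\<lambda>k. mpow (norm_adj E) k $ i $ j) k *\<^sub>R mpow (transpose W) k"
      using jac_part[of "norm_adj E" W B U s X j k i] by simp
  next
    show "(\<lambda>k. mpow (norm_adj E) k $ i $ j) \<longlonglongrightarrow> sqrt ((1 + real (degree E i)) * (1 + real (degree E j)))
                     / (real CARD('n) + 2 * real (card (undirected_edges E)))"
      by (rule entry_limit) (use sym irrefl connected in auto)
  qed
qed

end
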